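(* Let $\epsilon>0$ and $p=e^{\epsilon}/(e^{\epsilon}+1)$. Let $n\ge1$ users $u_1,\dots,u_n$, where user $u_i$ holds a value $v_i\in[-1,1]$ and a privacy preference $\epsilon_u^i\in\mathbb{R}$. Each user independently sets $v_i'=v_i$ if $\epsilon\le\epsilon_u^i$ and $v_i'=\bot$ otherwise, samples $s_i\in\{0,1\}$ uniformly at random, and draws $b_i\in\{0,1\}$ with $$\Pr[b_i=1]=\begin{cases}\frac{1-e^{\epsilon}}{1+e^{\epsilon}}\cdot\frac{v_i'}{2}+\frac12 & \text{if } s_i=0,\ v_i'\in[-1,1],\\ \frac{e^{\epsilon}-1}{e^{\epsilon}+1}\cdot\frac{v_i'}{2}+\frac12 & \text{if } s_i=1,\ v_i'\in[-1,1],\\ \frac{1}{e^{\epsilon}+1} & \text{if } v_i'=\bot \ (\text{either } s_i),\end{cases}$$ and reports $\langle s_i,b_i\rangle$. Let $$f_{\mathrm{POS}}=\frac{\#\{i:\langle s_i,b_i\rangle=\langle1,1\rangle\}}{\#\{i:s_i=1\}},\qquad f_{\mathrm{NEG}}=\frac{\#\{i:\langle s_i,b_i\rangle=\langle0,1\rangle\}}{\#\{i:s_i=0\}},$$ let $s=\sum_{i:\,\epsilon_u^i\ge\epsilon} v_i$ be the sum of the truthfully provided values and $f_\bot=\#\{i:\epsilon_u^i<\epsilon\}/n$ the fraction of users providing a null value, and define $$s^*=\frac{n}{2p-1}\left(f_{\mathrm{POS}}-f_{\mathrm{NEG}}\right),\qquad f_\bot^*=\frac{1-f_{\mathrm{POS}}-f_{\mathrm{NEG}}}{2p-1}.$$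 Then, conditionally on the event that $\#\{i:s_i=1\}\ge1$ and $\#\{i:s_i=0\}\ge1$, $s^*$ and $f_\bot^*$ are unbiased estimators of $s$ and $f_\bot$ respectively, i.e. $\mathbb{E}[s^*]=s$ and $\mathbb{E}[f_\bot^*]=f_\bot$.
   Context: All randomness is over the users' independent coin flips; the values $v_i$ and preferences $\epsilon_u^i$ are fixed. *)

theory Defs
  imports "HOL-Probability.Probability"
begin

definition p_eps :: "real \<Rightarrow> real" where
  "p_eps \<epsilon> = exp \<epsilon> / (exp \<epsilon> + 1)"

definition v_prime :: "real \<Rightarrow> real \<Rightarrow> real \<Rightarrow> real option" where
  "v_prime \<epsilon> v eu = (if \<epsilon> \<le> eu then Some v else None)"

text \<open>Probability that b = 1 given s (True encodes s = 1) and the value v'.\<close>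
definition prob_b1 :: "real \<Rightarrow> real option \<Rightarrow> bool \<Rightarrow> real" where
  "prob_b1 \<epsilon> v' s = (case v' of
      None \<Rightarrow> 1 / (exp \<epsilon> + 1)
    | Some x \<Rightarrow> (if s then (exp \<epsilon> - 1) / (exp \<epsilon> + 1) * (x / 2) + 1/2
                 else (1 - exp \<epsilon>) / (1 + exp \<epsilon>) * (x / 2) + 1/2))"

text \<open>Distribution of one user's report (s, b); True encodes 1, False encodes 0.\<close>
definition user_pmf :: "real \<Rightarrow> real \<Rightarrow> real \<Rightarrow> (bool \<times> bool) pmf" where
  "user_pmf \<epsilon> v eu =
     bind_pmf (bernoulli_pmf (1/2)) (\<lambda>s.
     bind_pmf (bernoulli_pmf (prob_b1 \<epsilon> (v_prime \<epsilon> v eu) s)) (\<lambda>b.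
     return_pmf (s, b)))"

definition reports_pmf :: "real \<Rightarrow> nat \<Rightarrow> (nat \<Rightarrow> real) \<Rightarrow> (nat \<Rightarrow> real) \<Rightarrow> (nat \<Rightarrow> bool \<times> bool) pmf" where
  "reports_pmf \<epsilon> n v eu = Pi_pmf {..<n} (False, False) (\<lambda>i. user_pmf \<epsilon> (v i) (eu i))"

definition f_POS :: "nat \<Rightarrow> (nat \<Rightarrow> bool \<times> bool) \<Rightarrow> real" where
  "f_POS n \<omega> = real (card {i. i < n \<and> \<omega> i = (True, True)}) / real (card {i. i < n \<and> fst (\<omega> i)})"

definition f_NEG :: "nat \<Rightarrow> (nat \<Rightarrow> bool \<times> bool) \<Rightarrow> real" where
  "f_NEG n \<omega> = real (card {i. i < n \<and> \<omega> i = (False, True)}) / real (card {i. i < n \<and> \<not> fst (\<omega> i)})"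

definition s_star :: "real \<Rightarrow> nat \<Rightarrow> (nat \<Rightarrow> bool \<times> bool) \<Rightarrow> real" where
  "s_star \<epsilon> n \<omega> = real n / (2 * p_eps \<epsilon> - 1) * (f_POS n \<omega> - f_NEG n \<omega>)"

definition f_bot_star :: "real \<Rightarrow> nat \<Rightarrow> (nat \<Rightarrow> bool \<times> bool) \<Rightarrow> real" where
  "f_bot_star \<epsilon> n \<omega> = (1 - f_POS n \<omega> - f_NEG n \<omega>) / (2 * p_eps \<epsilon> - 1)"

definition both_groups :: "nat \<Rightarrow> (nat \<Rightarrow> bool \<times> bool) set" where
  "both_groups n = {\<omega>. card {i. i < n \<and> fst (\<omega> i)} \<ge> 1 \<and> card {i. i < n \<and> \<not> fst (\<omega> i)} \<ge> 1}"

end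

theory Submission
  imports Defs
begin
lemma fin_Pi_pmf:
  fixes p :: "'a \<Rightarrow> 'b::finite pmf"
  assumes "finite A" shows "finite (set_pmf (Pi_pmf A d p))"
  by (rule finite_subset[OF set_Pi_pmf_subset'[OF assms]]) (intro finite_PiE_dflt assms, simp)

lemma expectation_bind_finite:
  fixes f :: "'b \<Rightarrow> real"
  assumes fM: "finite (set_pmf M)" and fN: "\<And>x. x \<in> set_pmf M \<Longrightarrow> finite (set_pmf (N x))"
  shows "measure_pmf.expectation (bind_pmf M N) f =
         measure_pmf.expectation M (\<lambda>x. measure_pmf.expectation (N x) f)"
proof -
  define Y where "Y = (\<Union>x\<in>set_pmf M. set_pmf (N x))"
  have fY: "finite Y" using fM fN by (auto simp: Y_def)
  have "measure_pmf.expectation (bind_pmf M N) f = (\<Sum>y\<in>Y. f y * pmf (bind_pmf M N) y)"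
    by (rule integral_measure_pmf_real[OF fY]) (auto simp: Y_def)
  also have "\<dots> = (\<Sum>y\<in>Y. f y * (\<Sum>x\<in>set_pmf M. pmf (N x) y * pmf M x))"
  proof (rule sum.cong[OF refl])
    fix y assume "y \<in> Y"
    have "pmf (bind_pmf M N) y = (\<Sum>x\<in>set_pmf M. pmf (N x) y * pmf M x)"
      unfolding pmf_bind by (rule integral_measure_pmf_real[OF fM]) auto
    then show "f y * pmf (bind_pmf M N) y = f y * (\<Sum>x\<in>set_pmf M. pmf (N x) y * pmf M x)" by simp
  qed
  also have "\<dots> = (\<Sum>x\<in>set_pmf M. (\<Sum>y\<in>Y. f y * pmf (N x) y) * pmf M x)"
    by (simp add: sum_distrib_left sum_distrib_right mult_ac sum.swap[of _ Y])
  also have "\<dots> = (\<Sum>x\<in>set_pmf M. measure_pmf.expectation (N x) f * pmf M x)"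
  proof (rule sum.cong[OF refl])
    fix x assume x: "x \<in> set_pmf M"
    have "measure_pmf.expectation (N x) f = (\<Sum>y\<in>Y. f y * pmf (N x) y)"
      by (rule integral_measure_pmf_real[OF fY]) (use x in \<open>auto simp: Y_def\<close>)
    then show "(\<Sum>y\<in>Y. f y * pmf (N x) y) * pmf M x = measure_pmf.expectation (N x) f * pmf M x" by simp
  qed
  also have "\<dots> = measure_pmf.expectation M (\<lambda>x. measure_pmf.expectation (N x) f)"
    by (rule integral_measure_pmf_real[OF fM, symmetric]) auto
  finally show ?thesis .
qed

lemma expectation_cond_finite:
  fixes X :: "'a \<Rightarrow> real"
  assumes fM: "finite (set_pmf M)" and P: "measure_pmf.prob M B \<noteq> 0"
  shows "measure_pmf.expectation (cond_pmf M B) X =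
         measure_pmf.expectation M (\<lambda>x. indicator B x * X x) / measure_pmf.prob M B"
proof -
  have ne: "set_pmf M \<inter> B \<noteq> {}" using P measure_pmf_zero_iff by blast
  have "measure_pmf.expectation (cond_pmf M B) X = (\<Sum>a\<in>set_pmf M. X a * pmf (cond_pmf M B) a)"
    by (rule integral_measure_pmf_real[OF fM]) (use ne in auto)
  also have "\<dots> = (\<Sum>a\<in>set_pmf M. indicator B a * X a * pmf M a) / measure_pmf.prob M B"
    by (auto simp add: pmf_cond[OF ne] sum_divide_distrib indicator_def intro!: sum.cong)
  also have "(\<Sum>a\<in>set_pmf M. indicator B a * X a * pmf M a) = measure_pmf.expectation M (\<lambda>x. indicator B x * X x)"
    by (rule integral_measure_pmf_real[OF fM, symmetric]) auto
  finally show ?thesis .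
qed


definition pr :: "real \<Rightarrow> (nat\<Rightarrow>real) \<Rightarrow> (nat\<Rightarrow>real) \<Rightarrow> nat \<Rightarrow> bool \<Rightarrow> real" where
  "pr \<epsilon> v eu i b = prob_b1 \<epsilon> (v_prime \<epsilon> (v i) (eu i)) b"
definition qq :: "real \<Rightarrow> (nat\<Rightarrow>real) \<Rightarrow> (nat\<Rightarrow>real) \<Rightarrow> nat \<Rightarrow> bool \<Rightarrow> (bool \<times> bool) pmf" where
  "qq \<epsilon> v eu i b = map_pmf (\<lambda>c. (b,c)) (bernoulli_pmf (pr \<epsilon> v eu i b))"
definition SS :: "nat \<Rightarrow> (nat \<Rightarrow> bool) pmf" where
  "SS n = Pi_pmf {..<n} False (\<lambda>_. bernoulli_pmf (1/2))"
definition RR where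
  "RR \<epsilon> n v eu s = Pi_pmf {..<n} (False,False) (\<lambda>i. qq \<epsilon> v eu i (s i))"
definition Bp :: "nat \<Rightarrow> (nat \<Rightarrow> bool) set" where
  "Bp n = {s. card {i. i < n \<and> s i} \<ge> 1 \<and> card {i. i < n \<and> \<not> s i} \<ge> 1}"
definition fgen :: "nat \<Rightarrow> bool \<Rightarrow> (nat \<Rightarrow> bool \<times> bool) \<Rightarrow> real" where
  "fgen n b \<omega> = real (card {i. i < n \<and> \<omega> i = (b, True)}) / real (card {i. i < n \<and> fst (\<omega> i) = b})"

lemma decomp: "reports_pmf \<epsilon> n v eu = bind_pmf (SS n) (RR \<epsilon> n v eu)"
proof -
  have "user_pmf \<epsilon> (v i) (eu i) = bind_pmf (bernoulli_pmf (1/2)) (\<lambda>s. qq \<epsilon> v eu i s)" for i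
    by (simp add: user_pmf_def qq_def pr_def map_pmf_def)
  then show ?thesis
    unfolding reports_pmf_def SS_def RR_def by (simp add: Pi_pmf_bind[where d'=False])
qed

lemma fPOS: "f_POS n = fgen n True" and fNEG: "f_NEG n = fgen n False"
  by (auto simp: fun_eq_iff f_POS_def f_NEG_def fgen_def)

lemma pr_range:
  assumes "\<epsilon> > 0" "v i \<in> {-1..1}"
  shows "0 \<le> pr \<epsilon> v eu i b \<and> pr \<epsilon> v eu i b \<le> 1"
proof -
  have e1: "exp \<epsilon> > 1" using assms by simp
  define q where "q = (exp \<epsilon> - 1) / (exp \<epsilon> + 1)"
  have ep: "0 < exp \<epsilon> - 1" "0 < exp \<epsilon> + 1" using e1 by linarith+
  then have q0: "0 < q" unfolding q_def by (rule divide_pos_pos)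
  have q1: "q < 1" unfolding q_def using ep by (simp add: divide_less_eq_1_pos)
  note q = q0 q1
  have q2: "(1 - exp \<epsilon>) / (1 + exp \<epsilon>) = - q" by (simp add: q_def add.commute minus_divide_left)
  have v: "-1 \<le> v i" "v i \<le> 1" using assms by auto
  have A: "0 \<le> q * (x/2) + 1/2 \<and> q * (x/2) + 1/2 \<le> 1" if "-1 \<le> x" "x \<le> 1" for x
  proof -
    have "\<bar>q * x\<bar> \<le> 1" using q that by (auto simp: abs_mult intro!: mult_le_one)
    then show ?thesis by (auto simp: abs_le_iff)
  qed
  have "0 \<le> 1 / (exp \<epsilon> + 1)" using ep by simp
  moreover have "1 / (exp \<epsilon> + 1) \<le> 1" by (subst divide_le_eq_1_pos[OF ep(2)]) (use e1 in linarith)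
  ultimately have "0 \<le> 1 / (exp \<epsilon> + 1)" "1 / (exp \<epsilon> + 1) \<le> 1" by auto
  then show ?thesis using A[of "v i"] A[of "- v i"] v q2
    by (auto simp: pr_def prob_b1_def v_prime_def q_def[symmetric])
qed

lemma RR_fin: "finite (set_pmf (RR \<epsilon> n v eu s))"
  unfolding RR_def by (rule fin_Pi_pmf) simp

lemma SS_fin: "finite (set_pmf (SS n))"
  unfolding SS_def by (rule fin_Pi_pmf) simp

lemma RR_fst: "\<omega> \<in> set_pmf (RR \<epsilon> n v eu s) \<Longrightarrow> i < n \<Longrightarrow> fst (\<omega> i) = s i"
  unfolding RR_def by (auto simp: set_Pi_pmf PiE_dflt_def qq_def)

lemma RR_coord:
  assumes "i < n" "0 \<le> pr \<epsilon> v eu i b" "pr \<epsilon> v eu i b \<le> 1"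
  shows "measure_pmf.expectation (RR \<epsilon> n v eu s) (\<lambda>\<omega>. if \<omega> i = (b, True) then 1 else (0::real))
       = (if s i = b then pr \<epsilon> v eu i b else 0)"
proof -
  have "measure_pmf.expectation (RR \<epsilon> n v eu s) (\<lambda>\<omega>. if \<omega> i = (b, True) then 1 else (0::real))
      = measure_pmf.expectation (map_pmf (\<lambda>\<omega>. \<omega> i) (RR \<epsilon> n v eu s)) (\<lambda>x. if x = (b, True) then 1 else (0::real))"
    by (simp only: integral_map_pmf)
  also have "map_pmf (\<lambda>\<omega>. \<omega> i) (RR \<epsilon> n v eu s) = qq \<epsilon> v eu i (s i)"
    unfolding RR_def using assms(1) by (simp add: Pi_pmf_component)
  also have "measure_pmf.expectation (qq \<epsilon> v eu i (s i)) (\<lambda>x. if x = (b, True) then 1 else (0::real))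
      = measure_pmf.expectation (bernoulli_pmf (pr \<epsilon> v eu i (s i))) (\<lambda>c. if (s i, c) = (b, True) then 1 else (0::real))"
    by (simp add: qq_def)
  also have "\<dots> = (if s i = b then pr \<epsilon> v eu i b else 0)"
  proof (cases "s i = b")
    case True
    have "measure_pmf.expectation (bernoulli_pmf (pr \<epsilon> v eu i b)) (\<lambda>c. if c then 1 else (0::real))
        = (\<Sum>c\<in>{True}. (if c then 1 else (0::real)) * pmf (bernoulli_pmf (pr \<epsilon> v eu i b)) c)"
      by (rule integral_measure_pmf_real) (auto split: if_splits)
    then show ?thesis using True assms by simp
  qed simp
  finally show ?thesis .
qed

lemma pmf_integral_cong:
  fixes f g :: "'a \<Rightarrow> real"
  shows "(\<And>x. x \<in> set_pmf M \<Longrightarrow> f x = g x) \<Longrightarrow> measure_pmf.expectation M f = measure_pmf.expectation M g"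
  by (intro integral_cong_AE) (auto simp: AE_measure_pmf_iff)

lemma pmf_integral_sum:
  fixes f :: "'i \<Rightarrow> 'a \<Rightarrow> real"
  assumes "finite (set_pmf M)"
  shows "measure_pmf.expectation M (\<lambda>x. \<Sum>i\<in>I. f i x) = (\<Sum>i\<in>I. measure_pmf.expectation M (f i))"
  by (rule Bochner_Integration.integral_sum) (rule integrable_measure_pmf_finite[OF assms])

lemma card_sum: "finite A \<Longrightarrow> real (card {i\<in>A. P i}) = (\<Sum>i\<in>A. if P i then 1 else (0::real))"
  by (simp add: sum.inter_filter[symmetric])

lemma inner_ind:
  "measure_pmf.expectation (RR \<epsilon> n v eu s) (indicator (both_groups n)) = (indicator (Bp n) s :: real)"
proof -
  have "measure_pmf.expectation (RR \<epsilon> n v eu s) (indicator (both_groups n))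
      = measure_pmf.expectation (RR \<epsilon> n v eu s) (\<lambda>_. indicator (Bp n) s :: real)"
  proof (rule pmf_integral_cong)
      fix \<omega> assume w: "\<omega> \<in> set_pmf (RR \<epsilon> n v eu s)"
      have "{i. i < n \<and> fst (\<omega> i)} = {i. i < n \<and> s i}" "{i. i < n \<and> \<not> fst (\<omega> i)} = {i. i < n \<and> \<not> s i}"
        using RR_fst[OF w] by auto
      then show "indicator (both_groups n) \<omega> = (indicator (Bp n) s :: real)"
        by (simp add: both_groups_def Bp_def indicator_def)
  qed
  then show ?thesis by simp
qed

lemma inner_f:
  assumes "\<And>i. i < n \<Longrightarrow> 0 \<le> pr \<epsilon> v eu i b \<and> pr \<epsilon> v eu i b \<le> 1"
  shows "measure_pmf.expectation (RR \<epsilon> n v eu s) (\<lambda>\<omega>. indicator (both_groups n) \<omega> * fgen n b \<omega>)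
    = indicator (Bp n) s / real (card {i. i < n \<and> s i = b}) * (\<Sum>i<n. if s i = b then pr \<epsilon> v eu i b else 0)"
proof -
  let ?c = "indicator (Bp n) s / real (card {i. i < n \<and> s i = b})"
  have "measure_pmf.expectation (RR \<epsilon> n v eu s) (\<lambda>\<omega>. indicator (both_groups n) \<omega> * fgen n b \<omega>)
      = measure_pmf.expectation (RR \<epsilon> n v eu s) (\<lambda>\<omega>. ?c * (\<Sum>i<n. if \<omega> i = (b, True) then 1 else (0::real)))"
  proof (rule pmf_integral_cong)
      fix \<omega> assume w: "\<omega> \<in> set_pmf (RR \<epsilon> n v eu s)"
      have "{i. i < n \<and> fst (\<omega> i)} = {i. i < n \<and> s i}" "{i. i < n \<and> \<not> fst (\<omega> i)} = {i. i < n \<and> \<not> s i}"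
        "{i. i < n \<and> fst (\<omega> i) = b} = {i. i < n \<and> s i = b}"
        using RR_fst[OF w] by auto
      moreover have "real (card {i. i < n \<and> \<omega> i = (b, True)}) = (\<Sum>i<n. if \<omega> i = (b, True) then 1 else (0::real))"
        using card_sum[of "{..<n}" "\<lambda>i. \<omega> i = (b, True)"] by (simp add: lessThan_def)
      ultimately show "indicator (both_groups n) \<omega> * fgen n b \<omega> = ?c * (\<Sum>i<n. if \<omega> i = (b, True) then 1 else (0::real))"
        by (simp add: both_groups_def Bp_def indicator_def fgen_def)
  qed
  also have "\<dots> = ?c * (\<Sum>i<n. measure_pmf.expectation (RR \<epsilon> n v eu s) (\<lambda>\<omega>. if \<omega> i = (b, True) then 1 else (0::real)))"
  proof -
    have "measure_pmf.expectation (RR \<epsilon> n v eu s) (\<lambda>\<omega>. \<Sum>i<n. if \<omega> i = (b, True) then 1 else (0::real))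
       = (\<Sum>i<n. measure_pmf.expectation (RR \<epsilon> n v eu s) (\<lambda>\<omega>. if \<omega> i = (b, True) then 1 else (0::real)))"
      by (simp only: pmf_integral_sum[OF RR_fin])
    then show ?thesis by simp
  qed
  also have "\<dots> = ?c * (\<Sum>i<n. if s i = b then pr \<epsilon> v eu i b else 0)"
  proof -
    have "(\<Sum>i<n. measure_pmf.expectation (RR \<epsilon> n v eu s) (\<lambda>\<omega>. if \<omega> i = (b, True) then 1 else (0::real)))
        = (\<Sum>i<n. if s i = b then pr \<epsilon> v eu i b else 0)"
      using RR_coord assms by (intro sum.cong) auto
    then show ?thesis by simp
  qed
  finally show ?thesis .
qed

definition swp :: "nat \<Rightarrow> nat \<Rightarrow> nat \<Rightarrow> nat" where
  "swp i j k = (if k = i then j else if k = j then i else k)"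

lemma swp_swp[simp]: "swp i j (swp i j k) = k" by (auto simp: swp_def)

lemma swp_bij: "i < n \<Longrightarrow> j < n \<Longrightarrow> bij_betw (swp i j) {..<n} {..<n}"
  by (rule bij_betw_byWitness[where f'="swp i j"]) (auto simp: swp_def)

lemma card_swp:
  assumes "i < n" "j < n"
  shows "card {k. k < n \<and> P (s (swp i j k))} = card {k. k < n \<and> P (s k)}"
proof -
  have "{k. k < n \<and> P (s k)} = swp i j ` {k. k < n \<and> P (s (swp i j k))}"
    using assms by (auto simp: swp_def image_iff split: if_splits)
  moreover have "inj_on (swp i j) X" for X by (metis inj_onI swp_swp)
  ultimately show ?thesis by (simp add: card_image)
qed

lemma S_swap:
  fixes F :: "(nat \<Rightarrow> bool) \<Rightarrow> real"
  assumes "i < n" "j < n"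
  shows "measure_pmf.expectation (Pi_pmf {..<n} False (\<lambda>_. bernoulli_pmf (1/2))) (\<lambda>s. F (s \<circ> swp i j))
       = measure_pmf.expectation (Pi_pmf {..<n} False (\<lambda>_. bernoulli_pmf (1/2))) F"
proof -
  have "Pi_pmf {..<n} False (\<lambda>_. bernoulli_pmf (1/2)) =
        map_pmf (\<lambda>g. g \<circ> swp i j) (Pi_pmf {..<n} False (\<lambda>_. bernoulli_pmf (1/2)))"
    by (rule Pi_pmf_bij_betw) (use assms swp_bij in \<open>auto simp: swp_def\<close>)
  then show ?thesis by (metis integral_map_pmf)
qed


lemma sym_K:
  assumes "i < n"
  shows "measure_pmf.expectation (SS n) (\<lambda>s. indicator (Bp n) s / real (card {i. i < n \<and> s i = b}) * (if s i = b then 1 else (0::real)))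
       = measure_pmf.expectation (SS n) (\<lambda>s. indicator (Bp n) s / real (card {i. i < n \<and> s i = b}) * (if s 0 = b then 1 else (0::real)))"
proof -
  have n0: "0 < n" using assms by simp
  let ?F = "\<lambda>s. indicator (Bp n) s / real (card {i. i < n \<and> s i = b}) * (if s 0 = b then 1 else (0::real)) :: real"
  have "?F (s \<circ> swp i 0) = indicator (Bp n) s / real (card {i. i < n \<and> s i = b}) * (if s i = b then 1 else (0::real))" for s
  proof -
    have "card {k. k < n \<and> (s \<circ> swp i 0) k = b} = card {k. k < n \<and> s k = b}"
      "card {k. k < n \<and> (s \<circ> swp i 0) k} = card {k. k < n \<and> s k}"
      "card {k. k < n \<and> \<not> (s \<circ> swp i 0) k} = card {k. k < n \<and> \<not> s k}"
      using card_swp[OF assms n0, of "\<lambda>x. x = b" s] card_swp[OF assms n0, of "\<lambda>x. x" s]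
        card_swp[OF assms n0, of "\<lambda>x. \<not> x" s] by (simp_all add: o_def)
    then show ?thesis by (simp add: Bp_def indicator_def swp_def)
  qed
  then show ?thesis using S_swap[OF assms n0, of ?F] by (simp add: SS_def)
qed

lemma outer_K:
  assumes "n \<ge> 1"
  shows "real n * measure_pmf.expectation (SS n) (\<lambda>s. indicator (Bp n) s / real (card {i. i < n \<and> s i = b}) * (if s 0 = b then 1 else (0::real)))
       = measure_pmf.expectation (SS n) (indicator (Bp n))"
proof -
  let ?G = "\<lambda>s. indicator (Bp n) s / real (card {i. i < n \<and> s i = b}) :: real"
  have "real n * measure_pmf.expectation (SS n) (\<lambda>s. ?G s * (if s 0 = b then 1 else (0::real)))
      = (\<Sum>i<n. measure_pmf.expectation (SS n) (\<lambda>s. ?G s * (if s i = b then 1 else (0::real))))"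
  proof -
    have "(\<Sum>i<n. measure_pmf.expectation (SS n) (\<lambda>s. ?G s * (if s i = b then 1 else (0::real))))
        = (\<Sum>i<n. measure_pmf.expectation (SS n) (\<lambda>s. ?G s * (if s 0 = b then 1 else (0::real))))"
      by (rule sum.cong[OF refl], subst sym_K, auto)
    then show ?thesis by simp
  qed
  also have "\<dots> = measure_pmf.expectation (SS n) (\<lambda>s. ?G s * (\<Sum>i<n. if s i = b then 1 else (0::real)))"
  proof -
    have "measure_pmf.expectation (SS n) (\<lambda>s. \<Sum>i<n. ?G s * (if s i = b then 1 else (0::real)))
       = (\<Sum>i<n. measure_pmf.expectation (SS n) (\<lambda>s. ?G s * (if s i = b then 1 else (0::real))))"
      by (simp only: pmf_integral_sum[OF SS_fin] integral_mult_right_zero)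
    then show ?thesis by (simp add: sum_distrib_left)
  qed
  also have "\<dots> = measure_pmf.expectation (SS n) (indicator (Bp n))"
  proof (rule Bochner_Integration.integral_cong[OF refl])
    fix s
    have c: "real (card {i. i < n \<and> s i = b}) = (\<Sum>i<n. if s i = b then 1 else (0::real))"
      using card_sum[of "{..<n}" "\<lambda>i. s i = b"] by (simp add: lessThan_def)
    have cnz: "card {i. i < n \<and> s i = b} \<noteq> 0" if "s \<in> Bp n"
    proof -
      have "1 \<le> card {i. i < n \<and> s i = b}" using that by (cases b) (simp_all add: Bp_def)
      then show ?thesis by linarith
    qed
    show "?G s * (\<Sum>i<n. if s i = b then 1 else (0::real)) = indicator (Bp n) s"
    proof (cases "s \<in> Bp n")
      case True
      have "real (card {i. i < n \<and> s i = b}) \<noteq> 0" using cnz[OF True] of_nat_eq_0_iff by metis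
      then show ?thesis unfolding c[symmetric] using True by (simp add: indicator_def)
    qed (simp add: indicator_def)
  qed
  finally show ?thesis .
qed

lemma outer_f:
  assumes "n \<ge> 1" "\<And>i. i < n \<Longrightarrow> 0 \<le> pr \<epsilon> v eu i b \<and> pr \<epsilon> v eu i b \<le> 1"
  shows "measure_pmf.expectation (reports_pmf \<epsilon> n v eu) (\<lambda>\<omega>. indicator (both_groups n) \<omega> * fgen n b \<omega>)
     = (\<Sum>i<n. pr \<epsilon> v eu i b) * measure_pmf.expectation (SS n) (indicator (Bp n)) / real n"
proof -
  let ?G = "\<lambda>s. indicator (Bp n) s / real (card {i. i < n \<and> s i = b}) :: real"
  let ?K = "measure_pmf.expectation (SS n) (\<lambda>s. ?G s * (if s 0 = b then 1 else (0::real)))"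
  have "measure_pmf.expectation (reports_pmf \<epsilon> n v eu) (\<lambda>\<omega>. indicator (both_groups n) \<omega> * fgen n b \<omega>)
     = measure_pmf.expectation (SS n) (\<lambda>s. ?G s * (\<Sum>i<n. if s i = b then pr \<epsilon> v eu i b else 0))"
    unfolding decomp by (subst expectation_bind_finite) (auto simp: SS_fin RR_fin inner_f[OF assms(2)])
  also have "\<dots> = measure_pmf.expectation (SS n) (\<lambda>s. \<Sum>i<n. pr \<epsilon> v eu i b * (?G s * (if s i = b then 1 else (0::real))))"
    by (rule Bochner_Integration.integral_cong[OF refl]) (auto simp: sum_distrib_left intro!: sum.cong)
  also have "\<dots> = (\<Sum>i<n. pr \<epsilon> v eu i b * measure_pmf.expectation (SS n) (\<lambda>s. ?G s * (if s i = b then 1 else (0::real))))"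
    by (simp only: pmf_integral_sum[OF SS_fin] integral_mult_right_zero)
  also have "\<dots> = (\<Sum>i<n. pr \<epsilon> v eu i b * ?K)"
    by (rule sum.cong[OF refl], subst sym_K, auto)
  also have "\<dots> = (\<Sum>i<n. pr \<epsilon> v eu i b) * (real n * ?K) / real n"
  proof -
    have "real n \<noteq> 0" using assms(1) by simp
    then show ?thesis by (simp add: sum_distrib_right[symmetric])
  qed
  also have "real n * ?K = measure_pmf.expectation (SS n) (indicator (Bp n))"
    by (rule outer_K[OF assms(1)])
  finally show ?thesis .
qed

lemma outer_P:
  "measure_pmf.prob (reports_pmf \<epsilon> n v eu) (both_groups n) = measure_pmf.expectation (SS n) (indicator (Bp n))"
proof -
  have "measure_pmf.prob (reports_pmf \<epsilon> n v eu) (both_groups n) =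
        measure_pmf.expectation (reports_pmf \<epsilon> n v eu) (indicator (both_groups n))"
    by simp
  also have "\<dots> = measure_pmf.expectation (SS n) (indicator (Bp n))"
    unfolding decomp
    apply (subst expectation_bind_finite[OF SS_fin RR_fin])
    apply (rule pmf_integral_cong)
    apply (rule inner_ind)
    done
  finally show ?thesis .
qed

lemma cond_fin:
  assumes "finite (set_pmf M)" "measure_pmf.prob M B \<noteq> 0"
  shows "finite (set_pmf (cond_pmf M B))"
proof -
  have ne: "set_pmf M \<inter> B \<noteq> {}" using assms(2) measure_pmf_zero_iff by blast
  show ?thesis using assms(1) by (simp add: set_cond_pmf[OF ne])
qed

lemma reports_fin: "finite (set_pmf (reports_pmf \<epsilon> n v eu))"
  unfolding reports_pmf_def by (rule fin_Pi_pmf) simp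

theorem theorem5:
  fixes \<epsilon> :: real and n :: nat and v eu :: "nat \<Rightarrow> real"
  assumes "\<epsilon> > 0" and "n \<ge> 1"
    and "\<And>i. i < n \<Longrightarrow> v i \<in> {-1..1}"
    and "measure_pmf.prob (reports_pmf \<epsilon> n v eu) (both_groups n) \<noteq> 0"
  shows "measure_pmf.expectation (cond_pmf (reports_pmf \<epsilon> n v eu) (both_groups n)) (s_star \<epsilon> n)
           = (\<Sum>i\<in>{i. i < n \<and> eu i \<ge> \<epsilon>}. v i)
       \<and> measure_pmf.expectation (cond_pmf (reports_pmf \<epsilon> n v eu) (both_groups n)) (f_bot_star \<epsilon> n)
           = real (card {i. i < n \<and> eu i < \<epsilon>}) / real n"
proof -
  let ?M = "reports_pmf \<epsilon> n v eu"
  let ?C = "cond_pmf ?M (both_groups n)"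
  define P where "P = measure_pmf.prob ?M (both_groups n)"
  have P0: "P \<noteq> 0" using assms(4) by (simp add: P_def)
  have n0: "real n > 0" using assms(2) by simp
  have rng: "\<And>i. i < n \<Longrightarrow> 0 \<le> pr \<epsilon> v eu i b \<and> pr \<epsilon> v eu i b \<le> 1" for b
    using pr_range[OF assms(1) assms(3)] by simp
  have EF: "measure_pmf.expectation ?C (fgen n b) = (\<Sum>i<n. pr \<epsilon> v eu i b) / real n" for b
  proof -
    have "measure_pmf.expectation ?C (fgen n b) =
          measure_pmf.expectation ?M (\<lambda>x. indicator (both_groups n) x * fgen n b x) / P"
      unfolding P_def by (rule expectation_cond_finite[OF reports_fin assms(4)])
    also have "\<dots> = (\<Sum>i<n. pr \<epsilon> v eu i b) * P / real n / P"
      by (simp add: outer_f[OF assms(2) rng] outer_P P_def)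
    finally show ?thesis using P0 by simp
  qed
  have Cfin: "finite (set_pmf ?C)" by (rule cond_fin[OF reports_fin assms(4)])
  have int: "integrable (measure_pmf ?C) f" for f :: "_ \<Rightarrow> real"
    by (rule integrable_measure_pmf_finite[OF Cfin])
  define e where "e = exp \<epsilon>"
  have e1: "e > 1" using assms(1) by (simp add: e_def)
  define q where "q = (e - 1) / (e + 1)"
  have q0: "q > 0" using e1 by (simp add: q_def)
  have pq: "2 * p_eps \<epsilon> - 1 = q" using e1 by (simp add: p_eps_def q_def e_def[symmetric] field_simps)
  have q2: "(1 - e) / (1 + e) = - q" by (simp add: q_def add.commute minus_divide_left)
  have q3: "1 - 2 / (e + 1) = q" using e1 by (simp add: q_def field_simps)
  have dif: "pr \<epsilon> v eu i True - pr \<epsilon> v eu i False = (if \<epsilon> \<le> eu i then q * v i else 0)" for i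
    by (simp add: pr_def prob_b1_def v_prime_def e_def[symmetric] q_def[symmetric] q2; simp add: algebra_simps)
  have sm: "1 - (pr \<epsilon> v eu i True + pr \<epsilon> v eu i False) = (if eu i < \<epsilon> then q else 0)" for i
    using q3 by (simp add: pr_def prob_b1_def v_prime_def e_def[symmetric] q_def[symmetric] q2; simp add: algebra_simps)
  have "measure_pmf.expectation ?C (s_star \<epsilon> n)
      = measure_pmf.expectation ?C (\<lambda>\<omega>. real n / q * (fgen n True \<omega> - fgen n False \<omega>))"
    by (rule arg_cong[where f="measure_pmf.expectation ?C"]) (simp add: fun_eq_iff s_star_def fPOS fNEG pq)
  also have "\<dots> = real n / q * ((\<Sum>i<n. pr \<epsilon> v eu i True) / real n - (\<Sum>i<n. pr \<epsilon> v eu i False) / real n)"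
    by (simp add: Bochner_Integration.integral_diff[OF int int] EF)
  also have "\<dots> = (\<Sum>i<n. pr \<epsilon> v eu i True - pr \<epsilon> v eu i False) / q"
    using n0 q0 by (simp add: sum_subtractf field_simps)
  also have "\<dots> = (\<Sum>i<n. if \<epsilon> \<le> eu i then q * v i else 0) / q"
    by (simp add: dif)
  also have "\<dots> = (\<Sum>i\<in>{i. i < n \<and> eu i \<ge> \<epsilon>}. v i)"
  proof -
    have "(\<Sum>i<n. if \<epsilon> \<le> eu i then q * v i else 0) = (\<Sum>i\<in>{i\<in>{..<n}. \<epsilon> \<le> eu i}. q * v i)"
      by (rule sum.inter_filter[symmetric]) simp
    also have "{i\<in>{..<n}. \<epsilon> \<le> eu i} = {i. i < n \<and> eu i \<ge> \<epsilon>}" by auto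
    finally show ?thesis using q0 by (simp add: sum_distrib_left[symmetric])
  qed
  finally have S1: "measure_pmf.expectation ?C (s_star \<epsilon> n) = (\<Sum>i\<in>{i. i < n \<and> eu i \<ge> \<epsilon>}. v i)" .
  have "measure_pmf.expectation ?C (f_bot_star \<epsilon> n)
      = measure_pmf.expectation ?C (\<lambda>\<omega>. (1 - fgen n True \<omega> - fgen n False \<omega>) / q)"
    by (rule arg_cong[where f="measure_pmf.expectation ?C"]) (simp add: fun_eq_iff f_bot_star_def fPOS fNEG pq)
  also have "\<dots> = (1 - (\<Sum>i<n. pr \<epsilon> v eu i True) / real n - (\<Sum>i<n. pr \<epsilon> v eu i False) / real n) / q"
    by (simp add: Bochner_Integration.integral_diff[OF int int] EF)
  also have "\<dots> = (\<Sum>i<n. 1 - (pr \<epsilon> v eu i True + pr \<epsilon> v eu i False)) / real n / q"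
    using n0 q0 by (simp add: sum_subtractf sum.distrib field_simps)
  also have "\<dots> = (\<Sum>i<n. if eu i < \<epsilon> then q else 0) / real n / q"
    by (simp add: sm)
  also have "\<dots> = real (card {i. i < n \<and> eu i < \<epsilon>}) / real n"
  proof -
    have "(\<Sum>i<n. if eu i < \<epsilon> then q else 0) = q * real (card {i\<in>{..<n}. eu i < \<epsilon>})"
      by (simp add: sum.inter_filter[symmetric])
    also have "{i\<in>{..<n}. eu i < \<epsilon>} = {i. i < n \<and> eu i < \<epsilon>}" by auto
    finally show ?thesis using q0 by simp
  qed
  finally show ?thesis using S1 by simp
qed

end
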